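(* Let $k\ge 2$ be an integer and $n\in\mathbb{Z}$. Then $L_k^{(n)}=Q_k^{n}L_k^{(0)}=L_k^{(0)}Q_k^{n}$.
   Context: Fix an integer $k\ge2$. The generalized Fibonacci sequence of order $k$, $(f_{k,n})_{n\in\mathbb Z}$, is the two-sided integer sequence with $f_{k,0}=f_{k,1}=\dots=f_{k,k-2}=0$, $f_{k,k-1}=1$, and $f_{k,n+k}=f_{k,n+k-1}+f_{k,n+k-2}+\dots+f_{k,n}$ for all $n\in\mathbb Z$. For $n\in\mathbb Z$, the generalized Fibonacci matrix $Q_k^n$ is the $k\times k$ matrix with entries $(Q_k^n)_{i,1}=f_{k,k+n-i}$ and $(Q_k^n)_{i,j}=\sum_{m=n-i+j-1}^{k+n-i-1} f_{k,m}$ for $2\le j\le k$, $1\le i\le k$. In particular $Q_k=Q_k^1$ is the matrix whose first row is all ones, with $(Q_k)_{i+1,i}=1$ for $1\le i\le k-1$ and all other entries $0$; it is known that $Q_k^n$ equals the $n$-th power of $Q_k$ for every $n\in\mathbb Z$ (with $Q_k^0=I_k$), and $\det Q_k^n=(-1)^{(k-1)n}$. The generalized Lucas sequence of order $k$, $(l_{k,n})_{n\in\mathbb Z}$, is the two-sided sequence satisfying $l_{k,n+k}=l_{k,n+k-1}+\dots+l_{k,n}$ for all $n\in\mathbb Z$ with initial values $l_{k,r}=\operatorname{trace}(Q_k^r)$ for $0\le r\le k-1$ (so $l_{k,0}=k$ and $l_{k,r}=2^r-1$ for $1\le r\le k-1$). For $n\in\mathbb Z$ the generalized Lucas matrix $L_k^{(n)}$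 is the $k\times k$ matrix with entries $(L_k^{(n)})_{i,1}=l_{k,k+n-i}$ and $(L_k^{(n)})_{i,j}=\sum_{m=n-i+j-1}^{k+n-i-1} l_{k,m}$ for $2\le j\le k$, $1\le i\le k$. *)

theory Defs
  imports "Jordan_Normal_Form.Matrix"
begin

definition lin_rec_seq :: "nat \<Rightarrow> (int \<Rightarrow> int) \<Rightarrow> int \<Rightarrow> int" where
  "lin_rec_seq k a = (THE g. (\<forall>n. g (n + int k) = (\<Sum>j<k. g (n + int j))) \<and>
                            (\<forall>r. 0 \<le> r \<and> r < int k \<longrightarrow> g r = a r))"

definition gfib :: "nat \<Rightarrow> int \<Rightarrow> int" where
  "gfib k = lin_rec_seq k (\<lambda>r. if r = int k - 1 then 1 else 0)"

text \<open>The k x k matrix built from a sequence s as in the paper (1-based indices i,j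
  of the paper correspond to 0-based indices i+1, j+1 here):
  entry (i,1) = s(k+n-i), entry (i,j) = sum_{m=n-i+j-1}^{k+n-i-1} s(m) for j >= 2.\<close>
definition seq_matrix :: "nat \<Rightarrow> (int \<Rightarrow> int) \<Rightarrow> int \<Rightarrow> int mat" where
  "seq_matrix k s n = mat k k (\<lambda>(i, j).
     (let i' = int i + 1; j' = int j + 1 in
      if j = 0 then s (int k + n - i')
      else (\<Sum>m\<in>{n - i' + j' - 1 .. int k + n - i' - 1}. s m)))"

definition Qmat :: "nat \<Rightarrow> int \<Rightarrow> int mat" where
  "Qmat k n = seq_matrix k (gfib k) n"

definition mtrace :: "int mat \<Rightarrow> int" where
  "mtrace A = (\<Sum>i<dim_row A. A $$ (i, i))"

definition glucas :: "nat \<Rightarrow> int \<Rightarrow> int" where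
  "glucas k = lin_rec_seq k (\<lambda>r. mtrace (Qmat k r))"

definition Lmat :: "nat \<Rightarrow> int \<Rightarrow> int mat" where
  "Lmat k n = seq_matrix k (glucas k) n"

end

theory Submission
  imports Defs
begin

function hseq :: "nat \<Rightarrow> (int \<Rightarrow> int) \<Rightarrow> int \<Rightarrow> int" where
  "hseq k a n = (if k = 0 then 0 else if 0 \<le> n \<and> n < int k then a n
     else if n \<ge> int k then (\<Sum>j<k. hseq k a (n - int k + int j))
     else hseq k a (n + int k) - (\<Sum>j\<in>{1..<k}. hseq k a (n + int j)))"
  by pat_completeness auto
termination
  by (relation "measures [\<lambda>(k,a,n). if n < 0 then nat (-n) else 0, \<lambda>(k,a,n). nat n]") auto

declare hseq.simps[simp del]

lemma hseq_rec:
  assumes "k \<ge> 1"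
  shows "hseq k a (n + int k) = (\<Sum>j<k. hseq k a (n + int j))"
proof (cases "n \<ge> 0")
  case True
  then show ?thesis using assms by (subst hseq.simps) simp
next
  case False
  have "hseq k a n = hseq k a (n + int k) - (\<Sum>j\<in>{1..<k}. hseq k a (n + int j))"
    using False assms by (subst hseq.simps) simp
  moreover have "(\<Sum>j<k. hseq k a (n + int j)) = hseq k a n + (\<Sum>j\<in>{1..<k}. hseq k a (n + int j))"
    using assms by (simp add: lessThan_atLeast0 sum.atLeast_Suc_lessThan)
  ultimately show ?thesis by simp
qed

lemma hseq_init: "0 \<le> r \<Longrightarrow> r < int k \<Longrightarrow> hseq k a r = a r"
  by (subst hseq.simps) simp

lemma rec_unique:
  fixes g1 g2 :: "int \<Rightarrow> int"
  assumes k: "k \<ge> 1"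
    and r1: "\<forall>n. g1 (n + int k) = (\<Sum>j<k. g1 (n + int j))"
    and r2: "\<forall>n. g2 (n + int k) = (\<Sum>j<k. g2 (n + int j))"
    and i: "\<forall>r. 0 \<le> r \<and> r < int k \<longrightarrow> g1 r = g2 r"
  shows "g1 = g2"
proof -
  have fwd: "\<forall>n. 0 \<le> n \<and> n < int m \<longrightarrow> g1 n = g2 n" for m
  proof (induction m)
    case 0 then show ?case by auto
  next
    case (Suc m)
    show ?case
    proof (intro allI impI)
      fix n assume n: "0 \<le> n \<and> n < int (Suc m)"
      show "g1 n = g2 n"
      proof (cases "n < int m")
        case True then show ?thesis using Suc n by auto
      next
        case False
        then have nm: "n = int m" using n by simp
        show ?thesis
        proof (cases "n < int k")
          case True then show ?thesis using i n by auto
        next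
          case False
          have "g1 n = (\<Sum>j<k. g1 (n - int k + int j))" using r1[rule_format, of "n - int k"] by simp
          also have "\<dots> = (\<Sum>j<k. g2 (n - int k + int j))"
            by (rule sum.cong) (use Suc nm False in auto)
          also have "\<dots> = g2 n" using r2[rule_format, of "n - int k"] by simp
          finally show ?thesis .
        qed
      qed
    qed
  qed
  have nonneg: "0 \<le> n \<Longrightarrow> g1 n = g2 n" for n
    using fwd[of "nat n + 1"] by auto
  have bwd: "\<forall>n. - int m \<le> n \<longrightarrow> g1 n = g2 n" for m
  proof (induction m)
    case 0 then show ?case using nonneg by simp
  next
    case (Suc m)
    show ?case
    proof (intro allI impI)
      fix n assume n: "- int (Suc m) \<le> n"
      show "g1 n = g2 n"
      proof (cases "- int m \<le> n")
        case True then show ?thesis using Suc by auto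
      next
        case False
        then have nm: "n = - int (Suc m)" using n by simp
        have s1: "(\<Sum>j<k. g n j) = g n 0 + (\<Sum>j\<in>{1..<k}. g n j)" for g :: "int \<Rightarrow> nat \<Rightarrow> int"
          using k by (simp add: lessThan_atLeast0 sum.atLeast_Suc_lessThan)
        have "g1 n = g1 (n + int k) - (\<Sum>j\<in>{1..<k}. g1 (n + int j))"
          using r1[rule_format, of n] s1[of "\<lambda>n j. g1 (n + int j)"] by simp
        also have "\<dots> = g2 (n + int k) - (\<Sum>j\<in>{1..<k}. g2 (n + int j))"
          using Suc nm k by (intro arg_cong2[where f="(-)"] sum.cong) auto
        also have "\<dots> = g2 n"
          using r2[rule_format, of n] s1[of "\<lambda>n j. g2 (n + int j)"] by simp
        finally show ?thesis .
      qed
    qed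
  qed
  show ?thesis
  proof
    fix n show "g1 n = g2 n" using bwd[of "nat (-n)"] by auto
  qed
qed

lemma lin_rec_seq_eq:
  assumes "k \<ge> 1"
  shows "lin_rec_seq k a = hseq k a"
  unfolding lin_rec_seq_def
proof (rule the_equality)
  show "(\<forall>n. hseq k a (n + int k) = (\<Sum>j<k. hseq k a (n + int j))) \<and>
    (\<forall>r. 0 \<le> r \<and> r < int k \<longrightarrow> hseq k a r = a r)"
    using hseq_rec[OF assms] hseq_init by auto
next
  fix g assume g: "(\<forall>n. g (n + int k) = (\<Sum>j<k. g (n + int j))) \<and>
    (\<forall>r. 0 \<le> r \<and> r < int k \<longrightarrow> g r = a r)"
  show "g = hseq k a"
    using g by (intro rec_unique[OF assms]) (auto simp: hseq_rec[OF assms] hseq_init)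
qed

lemma lrs_rec: "k \<ge> 1 \<Longrightarrow> lin_rec_seq k a (n + int k) = (\<Sum>j<k. lin_rec_seq k a (n + int j))"
  by (simp add: lin_rec_seq_eq hseq_rec)

lemma lrs_init: "k \<ge> 1 \<Longrightarrow> 0 \<le> r \<Longrightarrow> r < int k \<Longrightarrow> lin_rec_seq k a r = a r"
  by (simp add: lin_rec_seq_eq hseq_init)


definition Cm :: "nat \<Rightarrow> int mat" where
  "Cm k = mat k k (\<lambda>(i,j). if i = 0 \<or> i = j + 1 then 1 else 0)"

lemma Cm_carrier[simp]: "Cm k \<in> carrier_mat k k"
  by (simp add: Cm_def)

lemma sm_carrier[simp]: "seq_matrix k s n \<in> carrier_mat k k"
  by (simp add: seq_matrix_def)

lemma mult_entry:
  assumes "A \<in> carrier_mat k k" "B \<in> carrier_mat k k" "i < k" "j < k"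
  shows "(A * B) $$ (i,j) = (\<Sum>l<k. A $$ (i,l) * B $$ (l,j))"
  using assms by (simp add: scalar_prod_def row_def col_def lessThan_atLeast0)

lemma Cm_mult:
  assumes "X \<in> carrier_mat k k" "i < k" "j < k"
  shows "(Cm k * X) $$ (i,j) = (if i = 0 then (\<Sum>l<k. X $$ (l,j)) else X $$ (i - 1, j))"
proof -
  have "(Cm k * X) $$ (i,j) = (\<Sum>l<k. Cm k $$ (i,l) * X $$ (l,j))"
    using assms by (simp add: mult_entry)
  also have "\<dots> = (\<Sum>l<k. (if i = 0 then X $$ (l,j) else if l = i - 1 then X $$ (l,j) else 0))"
    using assms by (intro sum.cong) (auto simp: Cm_def)
  also have "\<dots> = (if i = 0 then (\<Sum>l<k. X $$ (l,j)) else X $$ (i - 1, j))"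
    using assms by (auto simp: sum.delta)
  finally show ?thesis .
qed

lemma mult_Cm:
  assumes "X \<in> carrier_mat k k" "i < k" "j < k"
  shows "(X * Cm k) $$ (i,j) = X $$ (i,0) + (if j + 1 < k then X $$ (i, j+1) else 0)"
proof -
  have "(X * Cm k) $$ (i,j) = (\<Sum>l<k. X $$ (i,l) * Cm k $$ (l,j))"
    using assms by (simp add: mult_entry)
  also have "\<dots> = (\<Sum>l<k. (if l = 0 then X $$ (i,l) else 0) + (if l = j + 1 then X $$ (i,l) else 0))"
    using assms by (intro sum.cong) (auto simp: Cm_def)
  also have "\<dots> = X $$ (i,0) + (if j + 1 < k then X $$ (i, j+1) else 0)"
    using assms by (simp add: sum.distrib sum.delta)
  finally show ?thesis .
qed

lemma sm_entry:
  assumes "i < k" "j < k"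
  shows "seq_matrix k s n $$ (i,j) = (if j = 0 then s (n - int i - 1 + int k)
           else (\<Sum>d\<in>{j..<k}. s (n - int i - 1 + int d)))"
proof (cases "j = 0")
  case True then show ?thesis using assms by (simp add: seq_matrix_def Let_def algebra_simps)
next
  case False
  have img: "{n - (int i + 1) + (int j + 1) - 1 .. int k + n - (int i + 1) - 1}
      = (\<lambda>d. n - int i - 1 + int d) ` {j..<k}"
  proof (rule antisym)
    show "{n - (int i + 1) + (int j + 1) - 1 .. int k + n - (int i + 1) - 1}
      \<subseteq> (\<lambda>d. n - int i - 1 + int d) ` {j..<k}"
    proof (rule subsetI)
      fix x assume x: "x \<in> {n - (int i + 1) + (int j + 1) - 1 .. int k + n - (int i + 1) - 1}"
      show "x \<in> (\<lambda>d. n - int i - 1 + int d) ` {j..<k}"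
      proof (rule image_eqI[where x="nat (x - (n - int i - 1))"])
        have x1: "int j \<le> x - (n - int i - 1)" and x2: "x - (n - int i - 1) < int k"
          using x by simp_all
        show "x = n - int i - 1 + int (nat (x - (n - int i - 1)))" using x1 by simp
        show "nat (x - (n - int i - 1)) \<in> {j..<k}" using x1 x2 by (simp add: le_nat_iff nat_less_iff)
      qed
    qed
  qed auto
  have inj: "inj_on (\<lambda>d. n - int i - 1 + int d) {j..<k}" by (auto simp: inj_on_def)
  have "seq_matrix k s n $$ (i,j) = sum s {n - (int i + 1) + (int j + 1) - 1 .. int k + n - (int i + 1) - 1}"
    using assms False unfolding seq_matrix_def Let_def by simp
  also have "\<dots> = sum s ((\<lambda>d. n - int i - 1 + int d) ` {j..<k})"
    by (simp only: img)
  also have "\<dots> = (\<Sum>d\<in>{j..<k}. s (n - int i - 1 + int d))"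
    by (simp only: sum.reindex[OF inj] o_def)
  finally show ?thesis using False by simp
qed

lemma rev_rec:
  assumes R: "\<forall>n. s (n + int k) = (\<Sum>j<k. s (n + int j))"
  shows "s x = (\<Sum>l<k. s (x - 1 - int l))"
proof -
  have "s x = (\<Sum>j<k. s (x - int k + int j))" using R[rule_format, of "x - int k"] by simp
  also have "\<dots> = (\<Sum>l<k. s (x - int k + int (k - Suc l)))"
    by (rule sum.nat_diff_reindex[symmetric])
  also have "\<dots> = (\<Sum>l<k. s (x - 1 - int l))"
    by (intro sum.cong) (auto simp: of_nat_diff algebra_simps)
  finally show ?thesis .
qed

lemma Cm_step:
  assumes R: "\<forall>n. s (n + int k) = (\<Sum>j<k. s (n + int j))"
  shows "Cm k * seq_matrix k s n = seq_matrix k s (n + 1)"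
proof (rule eq_matI)
  fix i j assume i: "i < dim_row (seq_matrix k s (n + 1))" and j: "j < dim_col (seq_matrix k s (n + 1))"
  then have i: "i < k" and j: "j < k" by (auto simp: seq_matrix_def)
  show "(Cm k * seq_matrix k s n) $$ (i, j) = seq_matrix k s (n + 1) $$ (i, j)"
  proof (cases "i = 0")
    case False
    then show ?thesis using i j by (simp add: Cm_mult sm_entry of_nat_diff algebra_simps)
  next
    case True
    show ?thesis
    proof (cases "j = 0")
      case True
      have "(\<Sum>l<k. s (n - int l - 1 + int k)) = s (n + int k)"
        using rev_rec[OF R, of "n + int k"] by (simp add: algebra_simps)
      then show ?thesis using i j True \<open>i = 0\<close> by (simp add: Cm_mult sm_entry)
    next
      case False
      have "(\<Sum>l<k. \<Sum>d\<in>{j..<k}. s (n - int l - 1 + int d)) = (\<Sum>d\<in>{j..<k}. \<Sum>l<k. s (n - int l - 1 + int d))"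
        by (rule sum.swap)
      also have "\<dots> = (\<Sum>d\<in>{j..<k}. s (n + int d))"
      proof (intro sum.cong refl)
        fix d show "(\<Sum>l<k. s (n - int l - 1 + int d)) = s (n + int d)"
          using rev_rec[OF R, of "n + int d"] by (simp add: algebra_simps)
      qed
      finally show ?thesis using i j False \<open>i = 0\<close> by (simp add: Cm_mult sm_entry)
    qed
  qed
qed (auto simp: seq_matrix_def Cm_def)


lemma shift_sum:
  assumes "j < k"
  shows "(\<Sum>d\<in>{j..<k}. s (t + 1 + int d)) = (\<Sum>d\<in>{j+1..<k}. s (t + int d)) + s (t + int k)"
proof -
  have "(\<Sum>d\<in>{j..<k}. s (t + 1 + int d)) = (\<Sum>d\<in>{j..<k}. (\<lambda>e. s (t + int e)) (d + 1))"
    by (simp add: algebra_simps)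
  also have "\<dots> = (\<Sum>d\<in>{j+1..<k+1}. s (t + int d))"
    by (rule sum.shift_bounds_nat_ivl[symmetric])
  also have "\<dots> = (\<Sum>d\<in>{j+1..<k}. s (t + int d)) + s (t + int k)"
    using assms by simp
  finally show ?thesis .
qed

lemma mult_Cm_step:
  assumes R: "\<forall>n. s (n + int k) = (\<Sum>j<k. s (n + int j))" and k: "k \<ge> 2"
  shows "seq_matrix k s n * Cm k = seq_matrix k s (n + 1)"
proof (rule eq_matI)
  fix i j assume i: "i < dim_row (seq_matrix k s (n + 1))" and j: "j < dim_col (seq_matrix k s (n + 1))"
  then have i: "i < k" and j: "j < k" by (auto simp: seq_matrix_def)
  define t where "t = n - int i - 1"
  have e1: "seq_matrix k s n $$ (i, j') = (if j' = 0 then s (t + int k)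
           else (\<Sum>d\<in>{j'..<k}. s (t + int d)))" if "j' < k" for j'
    using sm_entry[OF i that] by (simp add: t_def)
  have e2: "seq_matrix k s (n + 1) $$ (i, j) = (if j = 0 then s (t + 1 + int k)
           else (\<Sum>d\<in>{j..<k}. s (t + 1 + int d)))"
    using sm_entry[OF i j] by (simp add: t_def algebra_simps)
  have L: "(seq_matrix k s n * Cm k) $$ (i, j) = s (t + int k) +
      (if j + 1 < k then seq_matrix k s n $$ (i, j+1) else 0)"
    using mult_Cm[OF sm_carrier i j] e1[of 0] k by simp
  show "(seq_matrix k s n * Cm k) $$ (i, j) = seq_matrix k s (n + 1) $$ (i, j)"
  proof (cases "j = 0")
    case True
    have "s (t + 1 + int k) = (\<Sum>d<k. s (t + 1 + int d))" using R[rule_format, of "t+1"] by simp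
    also have "\<dots> = (\<Sum>d\<in>{0..<k}. s (t + 1 + int d))" by (simp add: lessThan_atLeast0)
    also have "\<dots> = (\<Sum>d\<in>{1..<k}. s (t + int d)) + s (t + int k)"
      using shift_sum[of 0 k s t] k by simp
    finally show ?thesis using L e2 e1[of 1] True k by simp
  next
    case False
    show ?thesis
    proof (cases "j + 1 < k")
      case True
      then show ?thesis using L e2 e1[of "j+1"] False shift_sum[OF j, of s t] by simp
    next
      case False
      then have "{j+1..<k} = {}" by simp
      then show ?thesis using L e2 False \<open>j \<noteq> 0\<close> shift_sum[OF j, of s t] by simp
    qed
  qed
qed (auto simp: seq_matrix_def Cm_def)

lemma Cm_cancel_left:
  assumes X: "X \<in> carrier_mat k k" and Y: "Y \<in> carrier_mat k k" and eq: "Cm k * X = Cm k * Y"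
  shows "X = Y"
proof -
  have A: "X $$ (i,j) = Y $$ (i,j)" if "i + 1 < k" "j < k" for i j
  proof -
    have "(Cm k * X) $$ (i+1, j) = (Cm k * Y) $$ (i+1, j)" using eq by simp
    then show ?thesis using Cm_mult[OF X, of "i+1" j] Cm_mult[OF Y, of "i+1" j] that by simp
  qed
  show ?thesis
  proof (rule eq_matI)
    fix i j assume "i < dim_row Y" "j < dim_col Y"
    then have i: "i < k" and j: "j < k" using Y by auto
    show "X $$ (i,j) = Y $$ (i,j)"
    proof (cases "i + 1 < k")
      case True then show ?thesis using A j by simp
    next
      case False
      then have ik: "i = k - 1" and kk: "k = Suc i" using i by auto
      have "(Cm k * X) $$ (0, j) = (Cm k * Y) $$ (0, j)" using eq by simp
      then have "(\<Sum>l<Suc i. X $$ (l,j)) = (\<Sum>l<Suc i. Y $$ (l,j))"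
        using Cm_mult[OF X, of 0 j] Cm_mult[OF Y, of 0 j] i j kk by simp
      moreover have "(\<Sum>l<i. X $$ (l,j)) = (\<Sum>l<i. Y $$ (l,j))"
        using A j kk by (intro sum.cong) auto
      ultimately show ?thesis by simp
    qed
  qed (use X Y in auto)
qed

lemma Cm_cancel_right:
  assumes X: "X \<in> carrier_mat k k" and Y: "Y \<in> carrier_mat k k" and eq: "X * Cm k = Y * Cm k"
  shows "X = Y"
proof -
  have A: "X $$ (i,0) = Y $$ (i,0)" if "i < k" for i
  proof -
    have "(X * Cm k) $$ (i, k-1) = (Y * Cm k) $$ (i, k-1)" using eq by simp
    then show ?thesis using mult_Cm[OF X, of i "k-1"] mult_Cm[OF Y, of i "k-1"] that by simp
  qed
  show ?thesis
  proof (rule eq_matI)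
    fix i j assume "i < dim_row Y" "j < dim_col Y"
    then have i: "i < k" and j: "j < k" using Y by auto
    show "X $$ (i,j) = Y $$ (i,j)"
    proof (cases "j = 0")
      case True then show ?thesis using A i by simp
    next
      case False
      have "(X * Cm k) $$ (i, j-1) = (Y * Cm k) $$ (i, j-1)" using eq by simp
      then show ?thesis using mult_Cm[OF X, of i "j-1"] mult_Cm[OF Y, of i "j-1"] A[OF i] i j False by simp
    qed
  qed (use X Y in auto)
qed


lemma gfib_rec: "k \<ge> 1 \<Longrightarrow> gfib k (n + int k) = (\<Sum>j<k. gfib k (n + int j))"
  unfolding gfib_def by (rule lrs_rec)

lemma gfib_init: "k \<ge> 1 \<Longrightarrow> 0 \<le> r \<Longrightarrow> r < int k \<Longrightarrow> gfib k r = (if r = int k - 1 then 1 else 0)"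
  unfolding gfib_def by (rule lrs_init)

lemma gfib_H:
  assumes k: "k \<ge> 1" and iK: "i + 1 \<le> K" and Kk: "K \<le> k"
  shows "(\<Sum>e<K. gfib k (int e - int i - 1)) = (if i = 0 then 1 else 0)"
proof -
  have "gfib k (int k - int i - 1) = (\<Sum>e<k. gfib k (int e - int i - 1))"
    using gfib_rec[OF k, of "- int i - 1"] by (simp add: algebra_simps)
  also have "\<dots> = (\<Sum>e\<in>{0..<K}. gfib k (int e - int i - 1)) + (\<Sum>e\<in>{K..<k}. gfib k (int e - int i - 1))"
    using Kk by (simp add: lessThan_atLeast0 sum.atLeastLessThan_concat)
  also have "(\<Sum>e\<in>{K..<k}. gfib k (int e - int i - 1)) = 0"
    using iK by (intro sum.neutral) (auto simp: gfib_init[OF k])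
  finally have "(\<Sum>e<K. gfib k (int e - int i - 1)) = gfib k (int k - int i - 1)"
    by (simp add: lessThan_atLeast0)
  also have "\<dots> = (if i = 0 then 1 else 0)"
    using iK Kk by (subst gfib_init[OF k]) auto
  finally show ?thesis .
qed

lemma Qmat0: assumes k: "k \<ge> 1" shows "Qmat k 0 = 1\<^sub>m k"
proof (rule eq_matI)
  fix i j assume "i < dim_row (1\<^sub>m k)" "j < dim_col (1\<^sub>m k)"
  then have i: "i < k" and j: "j < k" by auto
  show "Qmat k 0 $$ (i,j) = 1\<^sub>m k $$ (i,j)"
  proof (cases "j = 0")
    case True
    have g: "gfib k (- int i - 1 + int k) = (if i = 0 then 1 else 0)"
      using i by (subst gfib_init[OF k]) auto
    show ?thesis using i j True g unfolding Qmat_def by (simp add: sm_entry)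
  next
    case False
    have "Qmat k 0 $$ (i,j) = (\<Sum>d\<in>{j..<k}. gfib k (int d - int i - 1))"
      using i j False unfolding Qmat_def by (simp add: sm_entry algebra_simps)
    also have "\<dots> = (if i = j then 1 else 0)"
    proof (cases "j \<le> i")
      case True
      have "(\<Sum>d\<in>{j..<k}. gfib k (int d - int i - 1)) = (\<Sum>d\<in>{0+j..<(k-j)+j}. gfib k (int d - int i - 1))"
        using j by simp
      also have "\<dots> = (\<Sum>e\<in>{0..<k-j}. gfib k (int (e + j) - int i - 1))"
        by (rule sum.shift_bounds_nat_ivl)
      also have "\<dots> = (\<Sum>e<k-j. gfib k (int e - int (i - j) - 1))"
        using True by (simp add: lessThan_atLeast0 of_nat_diff algebra_simps)
      also have "\<dots> = (if i - j = 0 then 1 else 0)"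
        using True i j by (intro gfib_H[OF k]) auto
      finally show ?thesis using True by simp
    next
      case False
      have "(\<Sum>d\<in>{j..<k}. gfib k (int d - int i - 1)) = 0"
        using False by (intro sum.neutral) (auto simp: gfib_init[OF k])
      then show ?thesis using False by simp
    qed
    finally show ?thesis using i j by simp
  qed
qed (auto simp: Qmat_def seq_matrix_def)

theorem theorem2:
  fixes k :: nat and n :: int
  assumes "k \<ge> 2"
  shows "Lmat k n = Qmat k n * Lmat k 0 \<and> Lmat k n = Lmat k 0 * Qmat k n"
proof -
  have k1: "k \<ge> 1" using assms by simp
  have Rf: "\<forall>n. gfib k (n + int k) = (\<Sum>j<k. gfib k (n + int j))" using gfib_rec[OF k1] by blast
  have Rl: "\<forall>n. glucas k (n + int k) = (\<Sum>j<k. glucas k (n + int j))"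
    unfolding glucas_def using lrs_rec[OF k1] by blast
  have CQ: "Cm k * Qmat k m = Qmat k (m + 1)" for m unfolding Qmat_def by (rule Cm_step[OF Rf])
  have QC: "Qmat k m * Cm k = Qmat k (m + 1)" for m unfolding Qmat_def by (rule mult_Cm_step[OF Rf assms])
  have CL: "Cm k * Lmat k m = Lmat k (m + 1)" for m unfolding Lmat_def by (rule Cm_step[OF Rl])
  have LC: "Lmat k m * Cm k = Lmat k (m + 1)" for m unfolding Lmat_def by (rule mult_Cm_step[OF Rl assms])
  have Qc[simp]: "Qmat k m \<in> carrier_mat k k" for m unfolding Qmat_def by simp
  have Lc[simp]: "Lmat k m \<in> carrier_mat k k" for m unfolding Lmat_def by simp
  have Cc: "Cm k \<in> carrier_mat k k" by simp
  let ?L0 = "Lmat k 0"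
  show ?thesis
  proof (induction n rule: int_induct[where k=0])
    case base
    show ?case using Qmat0[OF k1] left_mult_one_mat[OF Lc[of 0]] right_mult_one_mat[OF Lc[of 0]] by simp
  next
    case (step1 i)
    then have h1: "Lmat k i = Qmat k i * ?L0" and h2: "Lmat k i = ?L0 * Qmat k i" by auto
    have "Lmat k (i+1) = Cm k * (Qmat k i * ?L0)" using CL h1 by metis
    also have "\<dots> = Qmat k (i+1) * ?L0" using CQ assoc_mult_mat[OF Cc Qc Lc] by metis
    finally have a: "Lmat k (i+1) = Qmat k (i+1) * ?L0" .
    have "Lmat k (i+1) = (?L0 * Qmat k i) * Cm k" using LC h2 by metis
    also have "\<dots> = ?L0 * Qmat k (i+1)" using QC assoc_mult_mat[OF Lc Qc Cc] by metis
    finally show ?case using a by simp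
  next
    case (step2 i)
    then have h1: "Lmat k i = Qmat k i * ?L0" and h2: "Lmat k i = ?L0 * Qmat k i" by auto
    have "Cm k * Lmat k (i - 1) = Lmat k i" using CL[of "i - 1"] by simp
    also have "\<dots> = (Cm k * Qmat k (i - 1)) * ?L0" using h1 CQ[of "i - 1"] by simp
    also have "\<dots> = Cm k * (Qmat k (i - 1) * ?L0)" using assoc_mult_mat[OF Cc Qc Lc] by simp
    finally have a: "Lmat k (i - 1) = Qmat k (i - 1) * ?L0"
      by (rule Cm_cancel_left[OF Lc mult_carrier_mat[OF Qc Lc]])
    have "Lmat k (i - 1) * Cm k = Lmat k i" using LC[of "i - 1"] by simp
    also have "\<dots> = ?L0 * (Qmat k (i - 1) * Cm k)" using h2 QC[of "i - 1"] by simp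
    also have "\<dots> = (?L0 * Qmat k (i - 1)) * Cm k" using assoc_mult_mat[OF Lc Qc Cc] by simp
    finally have b: "Lmat k (i - 1) = ?L0 * Qmat k (i - 1)"
      by (rule Cm_cancel_right[OF Lc mult_carrier_mat[OF Lc Qc]])
    show ?case using a b by simp
  qed
qed

end
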